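(* There exists $m_1>0$ with the following property. Let $f$ be a solution of $\frac{f''}{1+(f')^2}=\left(\frac r2-\frac{n-1}{r}\right)f'-\frac f2$ with $f(\sqrt{2(n-1)})>0$, and suppose $f'(r)>0$ and $f''(r)<0$ for all $r<\sqrt{2(n-1)}$ in its domain. Then $f(r)<0$ whenever $r<m_1$ and $f(r)$ is defined.
   Context: $n\ge2$ is a fixed integer; $f$ is a real function of $r>0$ defined on an interval containing $\sqrt{2(n-1)}$. *)

theory Defs
  imports "HOL-Analysis.Analysis"
begin

definition solves_ode :: "nat \<Rightarrow> real set \<Rightarrow> (real \<Rightarrow> real) \<Rightarrow> (real \<Rightarrow> real) \<Rightarrow> (real \<Rightarrow> real) \<Rightarrow> bool" where
  "solves_ode n I f f1 f2 \<longleftrightarrow>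
     (\<forall>r\<in>I. (f has_real_derivative f1 r) (at r) \<and> (f1 has_real_derivative f2 r) (at r) \<and>
        f2 r / (1 + (f1 r)\<^sup>2) = (r / 2 - (real n - 1) / r) * f1 r - f r / 2)"

end

theory Submission
  imports Defs
begin

lemma S_deriv:
  fixes n :: nat and s :: real
  assumes n: "n \<ge> 2" and s: "s > 0"
    and dg: "(g has_real_derivative g2) (at s)"
    and ode: "g2 / (1 + (g s)\<^sup>2) = (s / 2 - (real n - 1) / s) * g s - f s / 2"
  shows "((\<lambda>x. x^(n-1) * exp (-(x\<^sup>2)/4) * g x / sqrt (1 + (g x)\<^sup>2)) has_real_derivative
           -(s^(n-1) * exp (-(s\<^sup>2)/4) * f s / (2 * sqrt (1 + (g s)\<^sup>2)))) (at s)"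
proof -
  define q where "q = sqrt (1 + (g s)\<^sup>2)"
  have q0: "q > 0" unfolding q_def by (simp add: add_pos_nonneg)
  have qq: "q^2 = 1 + (g s)\<^sup>2" unfolding q_def by simp
  have g2: "g2 = (1 + (g s)\<^sup>2) * ((s / 2 - (real n - 1) / s) * g s - f s / 2)"
  proof -
    have h: "1 + (g s)\<^sup>2 \<noteq> 0" by (smt (verit) zero_le_power2)
    have "g2 = (g2 / (1 + (g s)\<^sup>2)) * (1 + (g s)\<^sup>2)" using h by simp
    also have "\<dots> = (1 + (g s)\<^sup>2) * ((s / 2 - (real n - 1) / s) * g s - f s / 2)" using ode by simp
    finally show ?thesis .
  qed
  have pw: "s^(n - Suc 0) = s * s^(n - Suc (Suc 0))" proof -
    have "n - Suc 0 = Suc (n - Suc (Suc 0))" using n by arith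
    then show ?thesis by simp
  qed
  have h0: "1 + (g s)\<^sup>2 > 0" by (smt (verit) zero_le_power2)
  have d1: "((\<lambda>x. 1 + (g x)\<^sup>2) has_real_derivative (2*g s*g2)) (at s)"
    apply (rule DERIV_cong)
     apply (rule derivative_eq_intros dg refl)+
    apply simp
    done
  have dq: "((\<lambda>x. sqrt (1 + (g x)\<^sup>2)) has_real_derivative (g s * g2 / q)) (at s)"
    apply (rule DERIV_cong[OF DERIV_chain2[OF DERIV_real_sqrt[OF h0] d1]])
    using q0 by (simp add: q_def field_simps)
  have dw: "((\<lambda>x. x^(n-1)*exp(-(x\<^sup>2)/4)) has_real_derivative (s^(n-1)*exp(-(s\<^sup>2)/4)*((real n - 1)/s - s/2))) (at s)"
    apply (rule DERIV_cong)
     apply (rule derivative_eq_intros refl)+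
       apply simp
       apply (rule refl)+
    using s pw n apply (simp add: of_nat_diff field_simps)
    done
  have alg: "\<And>W K G F q g2::real. q > 0 \<Longrightarrow> q^2 = 1 + G^2 \<Longrightarrow> g2 = (1 + G^2) * ((-K) * G - F/2) \<Longrightarrow>
     ((W*K*G + g2*W)*q - W*G*(G*g2/q))/(q*q) = -(W*F/(2*q))"
  proof -
    fix W K G F q g2 :: real
    assume a: "q > 0" "q^2 = 1 + G^2" "g2 = (1 + G^2) * ((-K) * G - F/2)"
    have g: "g2 = q^2*((-K)*G - F/2)" using a by simp
    have "G*g2/q = G*q*((-K)*G - F/2)" unfolding g using a(1) by (simp add: power2_eq_square)
    then have "((W*K*G + g2*W)*q - W*G*(G*g2/q)) = W*q*(K*G + (q^2 - G^2)*((-K)*G - F/2))"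
      apply (simp only:)
      apply (simp only: g)
      by (simp add: algebra_simps power2_eq_square)
    also have "q^2 - G^2 = 1" using a(2) by simp
    also have "W*q*(K*G + 1*((-K)*G - F/2)) = -(W*q*F/2)" by (simp add: algebra_simps)
    finally have N: "((W*K*G + g2*W)*q - W*G*(G*g2/q)) = -(W*q*F/2)" .
    show "((W*K*G + g2*W)*q - W*G*(G*g2/q))/(q*q) = -(W*F/(2*q))"
      unfolding N using a(1) by (simp add: field_simps)
  qed
  have g2': "g2 = (1 + (g s)^2) * ((-((real n - 1)/s - s/2)) * g s - f s/2)" using g2 by simp
  show ?thesis
    apply (rule DERIV_cong[OF DERIV_divide[OF DERIV_mult[OF dw dg] dq]])
    using q0 apply (simp add: q_def)
    using alg[OF q0 qq g2'] by (simp add: q_def)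
qed

lemma frac_le1: "(x::real) / sqrt (1 + x\<^sup>2) \<le> 1"
proof -
  have "x \<le> sqrt (x\<^sup>2)" by simp
  also have "\<dots> \<le> sqrt (1 + x\<^sup>2)" by (rule real_sqrt_le_mono) simp
  finally show ?thesis by (simp add: divide_le_eq add_pos_nonneg)
qed

lemma sq_pos1: "sqrt (1 + (x::real)\<^sup>2) > 0"
  by (simp add: add_pos_nonneg)

lemma sq_ge1: "sqrt (1 + (x::real)\<^sup>2) \<ge> 1"
  by simp

lemma sq_lt2: assumes "(x::real) > 0" "x / sqrt (1 + x\<^sup>2) < 1/2"
  shows "sqrt (1 + x\<^sup>2) < 2"
proof -
  define q where "q = sqrt (1 + x\<^sup>2)"
  have q0: "q > 0" unfolding q_def by (rule sq_pos1)
  have qq: "q\<^sup>2 = 1 + x\<^sup>2" unfolding q_def by (simp add: add_pos_nonneg)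
  have "2 * x < q" using assms(2) q0 unfolding q_def[symmetric] by (simp add: field_simps)
  then have "(2*x)\<^sup>2 < q\<^sup>2" using assms(1) by (intro power_strict_mono) auto
  then have "q\<^sup>2 < 2\<^sup>2" using qq by (simp add: power2_eq_square)
  then show ?thesis unfolding q_def[symmetric] using q0 by (smt (verit) power_mono)
qed

theorem lemma2p6:
  fixes n :: nat
  assumes "n \<ge> 2"
  shows "\<exists>m1>0. \<forall>(I::real set) f f1 f2.
           is_interval I \<and> open I \<and> I \<subseteq> {0<..} \<and> sqrt (2 * (real n - 1)) \<in> I \<and>
           solves_ode n I f f1 f2 \<and>
           f (sqrt (2 * (real n - 1))) > 0 \<and>
           (\<forall>r\<in>I. r < sqrt (2 * (real n - 1)) \<longrightarrow> f1 r > 0 \<and> f2 r < 0)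
           \<longrightarrow> (\<forall>r\<in>I. r < m1 \<longrightarrow> f r < 0)"
proof -
  define c where "c = sqrt (2 * (real n - 1))"
  have c0: "c > 0" unfolding c_def using assms by simp
  define w where "w = (\<lambda>x::real. x^(n-1) * exp (-(x\<^sup>2)/4))"
  have wpos: "\<And>s. s > 0 \<Longrightarrow> w s > 0" unfolding w_def by simp
  define w0 where "w0 = (c/2)^(n-1) * exp (-(c\<^sup>2)/4)"
  have w0pos: "w0 > 0" unfolding w0_def using c0 by simp
  define C1 where "C1 = 16/(c*w0)"
  have C1pos: "C1 > 0" unfolding C1_def using c0 w0pos by simp
  define \<rho> where "\<rho> = min 1 (min (c/2) (1/C1))"
  have \<rho>pos: "\<rho> > 0" unfolding \<rho>_def using c0 C1pos by simp
  have \<rho>C: "\<rho> \<le> 1/C1" unfolding \<rho>_def by simp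
  have \<rho>1: "\<rho> \<le> 1" "\<rho> \<le> c/2" "\<rho> * C1 \<le> 1"
    using \<rho>C C1pos unfolding \<rho>_def by (auto simp: le_divide_eq)
  define m1 where "m1 = min (\<rho> * exp (-2*C1)) (w0/2)"
  have m1pos: "m1 > 0" unfolding m1_def using \<rho>pos w0pos by simp
  show ?thesis
  proof (intro exI[of _ m1] conjI allI impI)
    show "m1 > 0" by (rule m1pos)
    fix I f g f2
    assume H: "is_interval I \<and> open I \<and> I \<subseteq> {0<..} \<and> sqrt (2 * (real n - 1)) \<in> I \<and>
           solves_ode n I f g f2 \<and>
           f (sqrt (2 * (real n - 1))) > 0 \<and>
           (\<forall>r\<in>I. r < sqrt (2 * (real n - 1)) \<longrightarrow> g r > 0 \<and> f2 r < 0)"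
    have Iint: "is_interval I" and Ipos: "I \<subseteq> {0<..}" and cI: "c \<in> I"
      and sol: "solves_ode n I f g f2" and fc: "f c > 0"
      and sgn: "\<And>r. r \<in> I \<Longrightarrow> r < c \<Longrightarrow> g r > 0 \<and> f2 r < 0"
      using H unfolding c_def by auto
    show "\<forall>r\<in>I. r < m1 \<longrightarrow> f r < 0"
    proof (intro ballI impI, rule ccontr)
      fix r assume rI: "r \<in> I" and rm: "r < m1" and nf: "\<not> f r < 0"
      have fr: "f r \<ge> 0" using nf by simp
      have r0: "r > 0" using rI Ipos by auto
      have rexp: "r < \<rho> * exp (-2*C1)" using rm unfolding m1_def by simp
      have "\<rho> * exp (-2*C1) \<le> \<rho>" using \<rho>pos C1pos by simp
      then have r\<rho>: "r < \<rho>" using rexp by simp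
      have rw0: "r < w0/2" using rm unfolding m1_def by simp
      have rc: "r < c/2" using r\<rho> \<rho>1 by simp
      have inI: "\<And>s. r \<le> s \<Longrightarrow> s \<le> c \<Longrightarrow> s \<in> I"
        using mem_is_interval_1_I[OF Iint rI cI] by blast
      have der: "\<And>s. s \<in> I \<Longrightarrow> (f has_real_derivative g s) (at s) \<and> (g has_real_derivative f2 s) (at s) \<and>
          f2 s / (1 + (g s)\<^sup>2) = (s / 2 - (real n - 1) / s) * g s - f s / 2"
        using sol unfolding solves_ode_def by blast
      have gpos: "\<And>s. r \<le> s \<Longrightarrow> s < c \<Longrightarrow> g s > 0"
        using sgn inI by fastforce
      have fmono: "\<And>x y. r \<le> x \<Longrightarrow> x \<le> y \<Longrightarrow> y < c \<Longrightarrow> f x \<le> f y"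
      proof -
        fix x y assume a: "r \<le> x" "x \<le> y" "y < c"
        show "f x \<le> f y"
          apply (rule DERIV_nonneg_imp_nondecreasing[OF a(2)])
          subgoal for t using der[OF inI[of t]] gpos[of t] a by (intro exI[of _ "g t"]) force
          done
      qed
      have fnn: "\<And>s. r \<le> s \<Longrightarrow> s < c \<Longrightarrow> f s \<ge> 0"
        using fmono fr by (meson order_refl order_trans)
      define S where "S = (\<lambda>x. x^(n-1) * exp (-(x\<^sup>2)/4) * g x / sqrt (1 + (g x)\<^sup>2))"
      have Sw: "\<And>s. S s = w s * (g s / sqrt (1 + (g s)\<^sup>2))" unfolding S_def w_def by simp
      have Sd: "\<And>s. r \<le> s \<Longrightarrow> s \<le> c \<Longrightarrow>
          (S has_real_derivative -(w s * f s / (2 * sqrt (1 + (g s)\<^sup>2)))) (at s)"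
      proof -
        fix s assume a: "r \<le> s" "s \<le> c"
        have "s > 0" using a r0 by simp
        then show "(S has_real_derivative -(w s * f s / (2 * sqrt (1 + (g s)\<^sup>2)))) (at s)"
          unfolding S_def w_def using S_deriv[OF assms, of s g "f2 s" f] der[OF inI[OF a]] by blast
      qed
      have Smono: "\<And>x y. r \<le> x \<Longrightarrow> x \<le> y \<Longrightarrow> y < c \<Longrightarrow> S y \<le> S x"
      proof -
        fix x y assume a: "r \<le> x" "x \<le> y" "y < c"
        show "S y \<le> S x"
          apply (rule DERIV_nonpos_imp_nonincreasing[OF a(2)])
          subgoal for t
            apply (intro exI[of _ "-(w t * f t / (2 * sqrt (1 + (g t)\<^sup>2)))"] conjI)
            using Sd[of t] a apply simp
            using wpos[of t] fnn[of t] a r0 sq_pos1[of "g t"] by simp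
          done
      qed
      define A where "A = S r"
      have grp: "g r > 0" using gpos[of r] rc c0 by simp
      have Apos: "A > 0" unfolding A_def Sw using wpos[OF r0] grp sq_pos1[of "g r"] by simp
      have wle: "\<And>s. 0 < s \<Longrightarrow> s \<le> 1 \<Longrightarrow> w s \<le> s"
      proof -
        fix s :: real assume a: "0 < s" "s \<le> 1"
        have "w s \<le> s^(n-1)" unfolding w_def using a by simp
        also have "\<dots> \<le> s^1" using a assms by (intro power_decreasing) auto
        finally show "w s \<le> s" by simp
      qed
      have wr: "w r \<le> r" using wle r0 r\<rho> \<rho>1 by simp
      have Aw: "A \<le> w r" unfolding A_def Sw using wpos[OF r0] frac_le1[of "g r"]
        by (intro mult_left_le) auto
      have Aw0: "A < w0/2" using Aw wr rw0 by simp
      define fc2 where "fc2 = f (c/2)"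
      have fc2nn: "fc2 \<ge> 0" unfolding fc2_def using fnn rc c0 by simp
      define L where "L = w0 * fc2 / 4"
      have step2: "\<And>s. c/2 \<le> s \<Longrightarrow> s \<le> 3*c/4 \<Longrightarrow> -(w s * f s / (2 * sqrt (1 + (g s)\<^sup>2))) \<le> -L"
      proof -
        fix s assume a: "c/2 \<le> s" "s \<le> 3*c/4"
        have s0: "s > 0" "r \<le> s" "s < c" using a c0 rc by auto
        have ws: "w0 \<le> w s"
        proof -
          have "(c/2)^(n-1) \<le> s^(n-1)" using a c0 by (intro power_mono) auto
          moreover have "exp (-(c\<^sup>2)/4) \<le> exp (-(s\<^sup>2)/4)"
          proof -
            have "s\<^sup>2 \<le> c\<^sup>2" using s0 by (intro power_mono) auto
            then show ?thesis by simp
          qed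
          ultimately show ?thesis unfolding w0_def w_def
            using s0 by (intro mult_mono) (auto simp: c0)
        qed
        define t where "t = g s / sqrt (1 + (g s)\<^sup>2)"
        have gs: "g s > 0" using gpos s0 by simp
        have t0: "t > 0" unfolding t_def using gs sq_pos1[of "g s"] by simp
        have "w s * t \<le> A" using Smono[of r s] s0 unfolding A_def Sw t_def by simp
        moreover have "w0 * t \<le> w s * t" using ws t0 by simp
        ultimately have "w0 * t < w0 * (1/2)" using Aw0 by simp
        then have "t < 1/2" using w0pos by simp
        then have q2: "sqrt (1 + (g s)\<^sup>2) < 2" using sq_lt2[OF gs] unfolding t_def by simp
        have fs: "fc2 \<le> f s" unfolding fc2_def using fmono[of "c/2" s] rc s0 a by simp
        have "w0 * fc2 \<le> w s * f s" using ws fs w0pos fc2nn by (intro mult_mono) auto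
        moreover have "w s * f s / 4 \<le> w s * f s / (2 * sqrt (1 + (g s)\<^sup>2))"
          using q2 sq_pos1[of "g s"] wpos[of s] fnn[of s] s0
          by (intro divide_left_mono) auto
        ultimately show "-(w s * f s / (2 * sqrt (1 + (g s)\<^sup>2))) \<le> -L" unfolding L_def by simp
      qed
      have fc2A: "fc2 < C1 * A"
      proof -
        have mon: "S (3*c/4) + L * (3*c/4) \<le> S (c/2) + L * (c/2)"
          apply (rule DERIV_nonpos_imp_nonincreasing[of "c/2" "3*c/4" "\<lambda>x. S x + L * x"])
           using c0 apply simp
          subgoal for t
            apply (intro exI[of _ "-(w t * f t / (2 * sqrt (1 + (g t)\<^sup>2))) + L"] conjI)
             apply (rule DERIV_cong[OF DERIV_add[OF Sd DERIV_cmult[OF DERIV_ident]]])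
            using rc c0 step2[of t] by auto
          done
        have "S (3*c/4) > 0"
        proof -
          have "3*c/4 > 0" "r \<le> 3*c/4" "3*c/4 < c" using c0 rc by auto
          then show ?thesis unfolding Sw using wpos gpos sq_pos1 by simp
        qed
        moreover have "S (c/2) \<le> A" unfolding A_def using Smono[of r "c/2"] rc c0 by simp
        ultimately have "L * (c/4) < A" using mon by (simp add: algebra_simps)
        then have "w0*fc2*c < 16*A" unfolding L_def by simp
        then show ?thesis unfolding C1_def using c0 w0pos by (simp add: field_simps)
      qed
      have step4: "\<And>s. r \<le> s \<Longrightarrow> s \<le> \<rho> \<Longrightarrow> S s \<ge> A/2"
      proof -
        fix s assume a: "r \<le> s" "s \<le> \<rho>"
        define K where "K = C1 * A / 2"
        have K0: "K \<ge> 0" unfolding K_def using C1pos Apos by simp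
        have dbound: "\<And>t. r \<le> t \<Longrightarrow> t \<le> \<rho> \<Longrightarrow> w t * f t / (2 * sqrt (1 + (g t)\<^sup>2)) \<le> K"
        proof -
          fix t assume b: "r \<le> t" "t \<le> \<rho>"
          have t0: "t > 0" "t \<le> 1" "t < c" using b r0 \<rho>1 c0 by auto
          have w1: "w t \<le> 1" using wle[of t] t0 by simp
          have ft: "0 \<le> f t" "f t \<le> fc2" unfolding fc2_def using fnn[of t] fmono[of t "c/2"] b t0 \<rho>1 c0 by auto
          have "w t * f t / (2 * sqrt (1 + (g t)\<^sup>2)) \<le> w t * f t / 2"
            using wpos[of t] t0 ft sq_ge1[of "g t"] by (intro divide_left_mono) (auto simp: add_pos_nonneg)
          also have "\<dots> \<le> f t / 2" using w1 ft wpos[of t] t0 by (simp add: mult_left_le_one_le divide_right_mono)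
          also have "\<dots> \<le> K" unfolding K_def using ft fc2A by simp
          finally show "w t * f t / (2 * sqrt (1 + (g t)\<^sup>2)) \<le> K" .
        qed
        have mon: "S r + K * r \<le> S s + K * s"
          apply (rule DERIV_nonneg_imp_nondecreasing[of r s "\<lambda>x. S x + K * x"])
           using a apply simp
          subgoal for t
            apply (intro exI[of _ "-(w t * f t / (2 * sqrt (1 + (g t)\<^sup>2))) + K"] conjI)
             apply (rule DERIV_cong[OF DERIV_add[OF Sd DERIV_cmult[OF DERIV_ident]]])
            using a \<rho>1 c0 dbound[of t] by auto
          done
        have "K * (s - r) \<le> K * \<rho>" using K0 a r0 by (intro mult_left_mono) auto
        moreover have "K * \<rho> \<le> A/2"
        proof -
          have "K * \<rho> = (\<rho> * C1) * (A/2)" unfolding K_def by simp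
          also have "\<dots> \<le> 1 * (A/2)" using \<rho>1(3) Apos by (intro mult_right_mono) auto
          finally show ?thesis by simp
        qed
        ultimately show "S s \<ge> A/2" using mon unfolding A_def by (simp add: algebra_simps)
      qed
      have step5: "\<And>s. r \<le> s \<Longrightarrow> s \<le> \<rho> \<Longrightarrow> g s \<ge> (A/2) / s"
      proof -
        fix s assume a: "r \<le> s" "s \<le> \<rho>"
        have s0: "s > 0" "s \<le> 1" "s < c" using a r0 \<rho>1 c0 by auto
        have gs: "g s > 0" using gpos a s0 by simp
        define t where "t = g s / sqrt (1 + (g s)\<^sup>2)"
        have tg: "t \<le> g s" unfolding t_def using gs sq_ge1[of "g s"]
          by (simp add: divide_le_eq mult_le_cancel_left1 add_pos_nonneg not_less add_nonneg_nonneg)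
        have ws: "0 < w s" "w s \<le> s" using wpos wle s0 by auto
        have "A/2 \<le> w s * t" using step4[OF a] unfolding Sw t_def .
        then have "(A/2) / w s \<le> t" using ws by (simp add: divide_le_eq mult.commute)
        moreover have "(A/2) / s \<le> (A/2) / w s" using ws Apos by (intro divide_left_mono) auto
        ultimately show "g s \<ge> (A/2) / s" using tg by simp
      qed
      have h1: "f \<rho> - (A/2) * ln \<rho> \<ge> f r - (A/2) * ln r"
        apply (rule DERIV_nonneg_imp_nondecreasing[of r \<rho> "\<lambda>x. f x - (A/2) * ln x"])
         using r\<rho> apply simp
        subgoal for t
          apply (intro exI[of _ "g t - (A/2) * (1 / t)"] conjI)
           apply (rule DERIV_diff[OF _ DERIV_cmult[OF DERIV_ln_divide]])
          using der[OF inI[of t]] \<rho>1 c0 r0 apply simp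
          using r0 apply simp
          using step5[of t] by simp
        done
      have h2: "f \<rho> \<le> fc2" unfolding fc2_def using fmono[of \<rho> "c/2"] r\<rho> \<rho>1 c0 by simp
      have h3: "ln r < ln \<rho> - 2*C1"
      proof -
        have "ln r < ln (\<rho> * exp (-2*C1))" using rexp r0 by simp
        also have "\<dots> = ln \<rho> - 2*C1" using \<rho>pos by (simp add: ln_mult)
        finally show ?thesis .
      qed
      have h4: "(A/2)*(2*C1) < (A/2)*(ln \<rho> - ln r)" using h3 Apos by (intro mult_strict_left_mono) auto
      have h5: "(A/2)*(ln \<rho> - ln r) = (A/2)*ln \<rho> - (A/2)*ln r" by (simp add: right_diff_distrib)
      have "(A/2)*(2*C1) < C1 * A" using h1 h2 h4 h5 fc2A fr by linarith
      then show False by simp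
    qed
  qed
qed

end
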